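(* Let $n\ge3$, $\alpha<1$, $q\in[1,\infty)$, $r,s\in[0,1)$, and for $\beta\in[0,\pi]$ set $$\mathcal{J}(\alpha,\beta,q,r,s)=\int_{-\pi}^{\pi}\big(1+s^2-2rs\cos\theta\big)^{\frac{(n-\alpha)q}{2}-n+1}|\cos(\theta-\beta)|^q\,d\theta.$$ (1) If $q=\frac{2n-2}{n-\alpha}$ or $q=\frac{2n}{n-\alpha}$, then $\beta\mapsto\mathcal{J}(\alpha,\beta,q,r,s)$ is constant on $[0,\pi]$. (2) If $\frac{2n-2}{n-\alpha}<q<\frac{2n}{n-\alpha}$, then $\beta\mapsto\mathcal{J}(\alpha,\beta,q,r,s)$ is increasing on $[0,\frac\pi2]$ and $\max_{\beta\in[0,\pi]}\mathcal{J}(\alpha,\beta,q,r,s)=\mathcal{J}(\alpha,\frac\pi2,q,r,s)$. (3) If $q>\frac{2n}{n-\alpha}$ or $1\le q<\frac{2n-2}{n-\alpha}$, then $\beta\mapsto\mathcal{J}(\alpha,\beta,q,r,s)$ is decreasing on $[0,\frac\pi2]$ and $\max_{\beta\in[0,\pi]}\mathcal{J}(\alpha,\beta,q,r,s)=\mathcal{J}(\alpha,0,q,r,s)$. *)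

theory Defs
  imports "HOL-Analysis.Analysis"
begin

text \<open>The integral J(alpha, beta, q, r, s) in dimension n, over [-pi, pi].
  The base 1 + s^2 - 2 r s cos theta is at least (1 - s)^2 > 0 for r, s in [0,1),
  so the real power powr is the usual one.\<close>
definition calJ :: "nat \<Rightarrow> real \<Rightarrow> real \<Rightarrow> real \<Rightarrow> real \<Rightarrow> real \<Rightarrow> real" where
  "calJ n \<alpha> \<beta> q r s =
     integral {-pi..pi}
       (\<lambda>\<theta>. (1 + s\<^sup>2 - 2 * r * s * cos \<theta>) powr ((real n - \<alpha>) * q / 2 - real n + 1)
              * \<bar>cos (\<theta> - \<beta>)\<bar> powr q)"

end

theory Submission
  imports Defs
begin


lemma period_shift:
  fixes h :: "real \<Rightarrow> real"
  assumes ch: "continuous_on UNIV h" and per: "\<And>x. h (x + 2*pi) = h x"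
    and c0: "0 \<le> c" and c1: "c \<le> 2*pi"
  shows "integral {-pi..pi} (\<lambda>x. h (x + c)) = integral {-pi..pi} h"
proof -
  have int: "\<And>a b. h integrable_on {a..b}"
    by (rule integrable_continuous_interval) (rule continuous_on_subset[OF ch], simp)
  have "integral {-pi..pi} (\<lambda>x. h (x + c)) = integral {-pi+c..pi+c} h"
    using integral_shift_Icc_real[where a="-pi" and b=pi and f=h and c=c] by (simp add: o_def add.commute)
  also have "\<dots> = integral {c-pi..pi} h + integral {pi..pi+c} h"
    using Henstock_Kurzweil_Integration.integral_combine[where a="c-pi" and c=pi and b="pi+c" and f=h] int c0 c1 by simp
  also have "integral {pi..pi+c} h = integral {-pi..-pi+c} (\<lambda>x. h (x + 2*pi))"
    using integral_shift_Icc_real[where a="-pi" and b="-pi+c" and f=h and c="2*pi"] by (simp add: o_def add.commute)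
  also have "\<dots> = integral {-pi..c-pi} h" using per by simp
  also have "integral {c-pi..pi} h + integral {-pi..c-pi} h = integral {-pi..pi} h"
    using Henstock_Kurzweil_Integration.integral_combine[where a="-pi" and c="c-pi" and b=pi and f=h] int c0 c1 by simp
  finally show ?thesis .
qed

lemma reflect_pi:
  fixes h :: "real \<Rightarrow> real"
  shows "integral {-pi..pi} (\<lambda>x. h (- x)) = integral {-pi..pi} h"
  using Henstock_Kurzweil_Integration.integral_reflect_real[where a="-pi" and b=pi and f=h] by simp

lemma H_deriv:
  fixes A B p c :: real
  assumes "0 \<le> B" "B < A" "\<bar>c\<bar> \<le> 1"
  shows "((\<lambda>c. (A - B*c) powr p + (A + B*c) powr p) has_real_derivative
           p * B * ((A + B*c) powr (p-1) - (A - B*c) powr (p-1))) (at c)"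
proof -
  have "B * c \<le> B * 1" "B * (-1) \<le> B * c" using assms
    by (intro mult_left_mono; simp add: abs_le_iff)+
  then have p1: "A - B*c > 0" "A + B*c > 0" using assms by auto
  have d1: "((\<lambda>c. A - B*c) has_real_derivative (- B)) (at c)"
    by (auto intro!: derivative_eq_intros)
  have d2: "((\<lambda>c. A + B*c) has_real_derivative B) (at c)"
    by (auto intro!: derivative_eq_intros)
  have e1: "((\<lambda>c. (A - B*c) powr p) has_real_derivative p * (A - B*c) powr (p-1) * (- B)) (at c)"
    using DERIV_chain2[OF has_real_derivative_powr[OF p1(1)] d1] by simp
  have e2: "((\<lambda>c. (A + B*c) powr p) has_real_derivative p * (A + B*c) powr (p-1) * B) (at c)"
    using DERIV_chain2[OF has_real_derivative_powr[OF p1(2)] d2] by simp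
  have e3: "p * (A - B*c) powr (p-1) * (- B) + p * (A + B*c) powr (p-1) * B
      = p * B * ((A + B*c) powr (p-1) - (A - B*c) powr (p-1))"
    by (simp add: algebra_simps)
  show ?thesis
    using DERIV_add[OF e1 e2] unfolding e3 .
qed

lemma pointwise:
  fixes G H :: "real \<Rightarrow> real" and b1 b2 \<theta> :: real
  assumes Gmono: "\<And>a b. 0 \<le> a \<Longrightarrow> a \<le> b \<Longrightarrow> b \<le> 1 \<Longrightarrow> G a \<le> G b"
   and Hmono: "\<And>a b. \<bar>a\<bar> \<le> \<bar>b\<bar> \<Longrightarrow> \<bar>b\<bar> \<le> 1 \<Longrightarrow> H b \<le> H a"
   and b: "0 \<le> b1" "b1 \<le> b2" "b2 \<le> pi/2"
  shows "0 \<le> (G ((cos (\<theta> - b2))\<^sup>2) - G ((cos (\<theta> - b1))\<^sup>2))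
              * (H (cos \<theta>) - H (cos ((b1 + b2) - \<theta>)))"
proof -
  define m where "m = (b1 + b2)/2"
  define d where "d = (b2 - b1)/2"
  define u where "u = \<theta> - m"
  have e1: "\<theta> - b2 = u - d" "\<theta> - b1 = u + d" "\<theta> = m + u" "b1 + b2 - \<theta> = m - u"
    by (auto simp: m_def d_def u_def field_simps)
  have k1: "(cos (u - d))\<^sup>2 - (cos (u + d))\<^sup>2 = 4 * ((sin u * cos u) * (sin d * cos d))"
    by (simp add: cos_add cos_diff power2_eq_square algebra_simps)
  have k2: "(cos (m + u))\<^sup>2 - (cos (m - u))\<^sup>2 = - 4 * ((sin m * cos m) * (sin u * cos u))"
    by (simp add: cos_add cos_diff power2_eq_square algebra_simps)
  have dpos: "0 \<le> sin d * cos d"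
    using b by (intro mult_nonneg_nonneg sin_ge_zero cos_ge_zero) (auto simp: d_def)
  have mpos: "0 \<le> sin m * cos m"
    using b by (intro mult_nonneg_nonneg sin_ge_zero cos_ge_zero) (auto simp: m_def)
  have c1a: "(cos x)\<^sup>2 \<le> 1" for x :: real using sin_cos_squared_add[of x] zero_le_power2[of "sin x"] by linarith
  have c1b: "\<bar>cos x\<bar> \<le> 1" for x :: real by (rule abs_cos_le_one)
  note c1 = c1a c1b
  have e3: "cos \<theta> = cos (m + u)" using e1(3) by simp
  have "0 \<le> (G ((cos (u - d))\<^sup>2) - G ((cos (u + d))\<^sup>2)) * (H (cos (m + u)) - H (cos (m - u)))"
  proof (cases "0 \<le> sin u * cos u")
    case True
    have p1: "0 \<le> (sin u * cos u) * (sin d * cos d)" using True dpos by (rule mult_nonneg_nonneg)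
    have p2: "0 \<le> (sin m * cos m) * (sin u * cos u)" using mpos True by (rule mult_nonneg_nonneg)
    have "(cos (u + d))\<^sup>2 \<le> (cos (u - d))\<^sup>2" using k1 p1 by linarith
    then have A: "0 \<le> G ((cos (u - d))\<^sup>2) - G ((cos (u + d))\<^sup>2)" using Gmono[OF _ _ c1a] by simp
    have "(cos (m + u))\<^sup>2 \<le> (cos (m - u))\<^sup>2" using k2 p2 by linarith
    then have "\<bar>cos (m + u)\<bar> \<le> \<bar>cos (m - u)\<bar>" by (simp only: abs_le_square_iff)
    then have B: "0 \<le> H (cos (m + u)) - H (cos (m - u))" using Hmono[OF _ c1b] by simp
    show ?thesis using A B by simp
  next
    case False
    have p1: "(sin u * cos u) * (sin d * cos d) \<le> 0" using mult_nonpos_nonneg[of "sin u * cos u" "sin d * cos d"] False dpos by linarith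
    have p2: "(sin m * cos m) * (sin u * cos u) \<le> 0" using mult_nonneg_nonpos[of "sin m * cos m" "sin u * cos u"] False mpos by linarith
    have "(cos (u - d))\<^sup>2 \<le> (cos (u + d))\<^sup>2" using k1 p1 by linarith
    then have A: "G ((cos (u - d))\<^sup>2) - G ((cos (u + d))\<^sup>2) \<le> 0" using Gmono[OF _ _ c1a] by simp
    have "(cos (m - u))\<^sup>2 \<le> (cos (m + u))\<^sup>2" using k2 p2 by linarith
    then have "\<bar>cos (m - u)\<bar> \<le> \<bar>cos (m + u)\<bar>" by (simp only: abs_le_square_iff)
    then have B: "H (cos (m + u)) - H (cos (m - u)) \<le> 0" using Hmono[OF _ c1b] by simp
    show ?thesis using A B by (simp add: mult_nonpos_nonpos)
  qed
  then show ?thesis by (simp only: e1(1,2,4) e3)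
qed



lemma main_mono:
  fixes f g G H :: "real \<Rightarrow> real"
  assumes cf: "continuous_on UNIV f" and cg: "continuous_on UNIV g"
   and fper: "\<And>x. f (x + 2*pi) = f x"
   and gdef: "\<And>x. g x = G ((cos x)\<^sup>2)"
   and Gmono: "\<And>a b. 0 \<le> a \<Longrightarrow> a \<le> b \<Longrightarrow> b \<le> 1 \<Longrightarrow> G a \<le> G b"
   and Hdef: "\<And>x. f x + f (x + pi) = H (cos x)"
   and Hmono: "\<And>a b. \<bar>a\<bar> \<le> \<bar>b\<bar> \<Longrightarrow> \<bar>b\<bar> \<le> 1 \<Longrightarrow> H b \<le> H a"
  shows "mono_on {0..pi/2} (\<lambda>\<beta>. integral {-pi..pi} (\<lambda>\<theta>. f \<theta> * g (\<theta> - \<beta>)))"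
proof (rule mono_onI)
  fix b1 b2 assume b1: "b1 \<in> {0..pi/2}" and b2: "b2 \<in> {0..pi/2}" and le: "b1 \<le> b2"
  define J where "J b = integral {-pi..pi} (\<lambda>\<theta>. f \<theta> * g (\<theta> - b))" for b
  define F where "F x = f x + f (x + pi)" for x
  define D where "D x = g (x - b2) - g (x - b1)" for x
  define m where "m = (b1+b2)/2"
  have cfc[continuous_intros]: "continuous_on UNIV (\<lambda>x. f (u x))" if "continuous_on UNIV u" for u
    by (rule continuous_on_compose2[OF cf that]) auto
  have cgc[continuous_intros]: "continuous_on UNIV (\<lambda>x. g (u x))" if "continuous_on UNIV u" for u
    by (rule continuous_on_compose2[OF cg that]) auto
  have int: "k integrable_on {-pi..pi}" if "continuous_on UNIV k" for k :: "real \<Rightarrow> real"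
    by (rule integrable_continuous_interval) (rule continuous_on_subset[OF that], simp)
  have gper: "g (x + pi) = g x" for x by (simp add: gdef)
  have gper2: "g (x + 2*pi) = g x" for x using gper[of x] gper[of "x + pi"] by (simp add: algebra_simps)
  have gper3: "g (x + 2*pi - y) = g (x - y)" for x y using gper2[of "x - y"] by (simp add: algebra_simps)
  have gneg: "g (- x) = g x" for x by (simp add: gdef)
  have fper': "f (x - 2*pi) = f x" for x using fper[of "x - 2*pi"] by simp
  have F2: "integral {-pi..pi} (\<lambda>\<theta>. F \<theta> * g (\<theta> - b)) = 2 * J b" for b
  proof -
    have "integral {-pi..pi} (\<lambda>\<theta>. F \<theta> * g (\<theta> - b)) =
          J b + integral {-pi..pi} (\<lambda>\<theta>. f (\<theta> + pi) * g (\<theta> - b))"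
      unfolding F_def J_def distrib_right
      by (rule integral_add; rule int; intro continuous_intros)
    also have "integral {-pi..pi} (\<lambda>\<theta>. f (\<theta> + pi) * g (\<theta> - b)) =
               integral {-pi..pi} (\<lambda>\<theta>. (\<lambda>t. f t * g (t - b)) (\<theta> + pi))"
      using gper[of "\<theta> - b" for \<theta>] by (simp add: algebra_simps diff_add_eq)
    also have "\<dots> = J b" unfolding J_def
      by (rule period_shift) (auto intro!: continuous_intros simp: fper gper3)
    finally show ?thesis by simp
  qed
  have S2: "integral {-pi..pi} (\<lambda>\<theta>. D \<theta> * F \<theta>) = 2 * (J b2 - J b1)"
  proof -
    have "integral {-pi..pi} (\<lambda>\<theta>. D \<theta> * F \<theta>) =
      integral {-pi..pi} (\<lambda>\<theta>. F \<theta> * g (\<theta> - b2)) - integral {-pi..pi} (\<lambda>\<theta>. F \<theta> * g (\<theta> - b1))"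
      unfolding D_def F_def
      by (subst integral_diff[symmetric]; (rule int; intro continuous_intros)?) (simp add: algebra_simps)
    then show ?thesis using F2 by simp
  qed
  have Dref: "D (2*m - x) = - D x" for x
  proof -
    have "cos (b1 - x) = cos (x - b1)" "cos (b2 - x) = cos (x - b2)"
      by (metis cos_minus minus_diff_eq)+
    moreover have "2*m - x - b2 = b1 - x" "2*m - x - b1 = b2 - x" by (simp_all add: m_def field_simps)
    ultimately show ?thesis unfolding D_def gdef by (simp only:)
  qed
  have S3: "integral {-pi..pi} (\<lambda>\<theta>. D \<theta> * F (2*m - \<theta>)) = - integral {-pi..pi} (\<lambda>\<theta>. D \<theta> * F \<theta>)"
  proof -
    define k where "k \<theta> = D \<theta> * F (2*m - \<theta>)" for \<theta>
    have ck: "continuous_on UNIV k" unfolding k_def D_def F_def by (intro continuous_intros)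
    have kper: "k (x + 2*pi) = k x" for x
    proof -
      have "2 * m - (x + 2 * pi) = (2*m - x) - 2*pi" "2 * m - (x + 2 * pi) + pi = (2*m - x + pi) - 2*pi"
        by simp_all
      then show ?thesis unfolding k_def D_def F_def
        by (simp only: fper') (simp add: algebra_simps gper2[of "x - b1", simplified algebra_simps] gper2[of "x - b2", simplified algebra_simps])
    qed
    have m0: "0 \<le> 2*m" "2*m \<le> 2*pi" using b1 b2 by (auto simp: m_def)
    have "integral {-pi..pi} k = integral {-pi..pi} (\<lambda>\<theta>. k (\<theta> + 2*m))"
      by (rule period_shift[symmetric, OF ck kper m0])
    also have "\<dots> = integral {-pi..pi} (\<lambda>\<theta>. k (- \<theta> + 2*m))"
      using reflect_pi[of "\<lambda>\<theta>. k (\<theta> + 2*m)"] by simp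
    also have "\<dots> = integral {-pi..pi} (\<lambda>\<theta>. - (D \<theta> * F \<theta>))"
      unfolding k_def using Dref by (simp add: algebra_simps)
    also have "\<dots> = - integral {-pi..pi} (\<lambda>\<theta>. D \<theta> * F \<theta>)" by (rule integral_neg)
    finally show ?thesis unfolding k_def .
  qed
  have S4: "integral {-pi..pi} (\<lambda>\<theta>. D \<theta> * (F \<theta> - F (2*m - \<theta>))) = 4 * (J b2 - J b1)"
  proof -
    have "integral {-pi..pi} (\<lambda>\<theta>. D \<theta> * (F \<theta> - F (2*m - \<theta>))) =
       integral {-pi..pi} (\<lambda>\<theta>. D \<theta> * F \<theta>) - integral {-pi..pi} (\<lambda>\<theta>. D \<theta> * F (2*m - \<theta>))"
      unfolding right_diff_distrib
      by (rule integral_diff; rule int; unfold D_def F_def; intro continuous_intros)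
    then show ?thesis using S2 S3 by simp
  qed
  have "0 \<le> integral {-pi..pi} (\<lambda>\<theta>. D \<theta> * (F \<theta> - F (2*m - \<theta>)))"
  proof (rule integral_nonneg)
    show "(\<lambda>\<theta>. D \<theta> * (F \<theta> - F (2*m - \<theta>))) integrable_on {-pi..pi}"
      by (rule int) (unfold D_def F_def, intro continuous_intros)
    fix x
    have "2*m = b1 + b2" by (simp add: m_def)
    then show "0 \<le> D x * (F x - F (2*m - x))"
      unfolding D_def F_def Hdef gdef
      using pointwise[where G=G and H=H and ?b1.0=b1 and ?b2.0=b2 and \<theta>=x, OF Gmono Hmono] b1 b2 le by auto
  qed
  then show "J b1 \<le> J b2" using S4 by simp
qed



lemma main_antimono:
  fixes f g G H :: "real \<Rightarrow> real"
  assumes cf: "continuous_on UNIV f" and cg: "continuous_on UNIV g"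
   and fper: "\<And>x. f (x + 2*pi) = f x"
   and gdef: "\<And>x. g x = G ((cos x)\<^sup>2)"
   and Gmono: "\<And>a b. 0 \<le> a \<Longrightarrow> a \<le> b \<Longrightarrow> b \<le> 1 \<Longrightarrow> G a \<le> G b"
   and Hdef: "\<And>x. f x + f (x + pi) = H (cos x)"
   and Hmono: "\<And>a b. \<bar>a\<bar> \<le> \<bar>b\<bar> \<Longrightarrow> \<bar>b\<bar> \<le> 1 \<Longrightarrow> H a \<le> H b"
  shows "antimono_on {0..pi/2} (\<lambda>\<beta>. integral {-pi..pi} (\<lambda>\<theta>. f \<theta> * g (\<theta> - \<beta>)))"
proof -
  have "mono_on {0..pi/2} (\<lambda>\<beta>. integral {-pi..pi} (\<lambda>\<theta>. (- f \<theta>) * g (\<theta> - \<beta>)))"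
  proof (rule main_mono[where G=G and H="\<lambda>c. - H c"])
    show "continuous_on UNIV (\<lambda>x. - f x)" using cf by (intro continuous_intros)
    show "- f x + - f (x + pi) = - H (cos x)" for x using Hdef[of x] by simp
  qed (use cg fper gdef Gmono Hmono in auto)
  then show ?thesis
    by (auto simp: mono_on_def monotone_on_def)
qed

lemma sym_pi:
  fixes f g G :: "real \<Rightarrow> real"
  assumes feven: "\<And>x. f (- x) = f x"
   and gdef: "\<And>x. g x = G ((cos x)\<^sup>2)"
  shows "integral {-pi..pi} (\<lambda>\<theta>. f \<theta> * g (\<theta> - (pi - b))) = integral {-pi..pi} (\<lambda>\<theta>. f \<theta> * g (\<theta> - b))"
proof -
  have e: "g (\<theta> - (pi - b)) = g (- \<theta> - b)" for \<theta>
  proof -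
    have "\<theta> - (pi - b) = (- (- \<theta> - b)) - pi" by simp
    then have "cos (\<theta> - (pi - b)) = - cos (- \<theta> - b)"
      by (simp only: cos_diff cos_pi sin_pi cos_minus) simp
    then show ?thesis by (simp add: gdef)
  qed
  show ?thesis
    using reflect_pi[of "\<lambda>\<theta>. f \<theta> * g (\<theta> - b)"] by (simp add: e feven)
qed

lemma H_mono:
  fixes A B p :: real
  assumes B: "0 \<le> B" "B < A"
  shows "0 \<le> p \<Longrightarrow> p \<le> 1 \<Longrightarrow> \<bar>a\<bar> \<le> \<bar>b\<bar> \<Longrightarrow> \<bar>b\<bar> \<le> 1 \<Longrightarrow>
      (A - B*b) powr p + (A + B*b) powr p \<le> (A - B*a) powr p + (A + B*a) powr p"
    and "p \<le> 0 \<or> 1 \<le> p \<Longrightarrow> \<bar>a\<bar> \<le> \<bar>b\<bar> \<Longrightarrow> \<bar>b\<bar> \<le> 1 \<Longrightarrow>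
      (A - B*a) powr p + (A + B*a) powr p \<le> (A - B*b) powr p + (A + B*b) powr p"
proof -
  define H where "H c = (A - B*c) powr p + (A + B*c) powr p" for c
  have Habs: "H c = H \<bar>c\<bar>" for c by (cases "c \<ge> 0") (auto simp: H_def add.commute)
  have pos: "0 < A - B*x" "0 < A + B*x" "A - B*x \<le> A + B*x" if "0 \<le> x" "x \<le> 1" for x
  proof -
    have "B * x \<le> B * 1" using that B by (intro mult_left_mono) auto
    moreover have "0 \<le> B * x" using that B by simp
    ultimately show "0 < A - B*x" "0 < A + B*x" "A - B*x \<le> A + B*x" using B by auto
  qed
  have der: "(H has_real_derivative p * B * ((A + B*x) powr (p-1) - (A - B*x) powr (p-1))) (at x)"
    if "0 \<le> x" "x \<le> 1" for x
    unfolding H_def by (rule H_deriv) (use that B in auto)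
  {
    assume p: "0 \<le> p" "p \<le> 1" and ab: "\<bar>a\<bar> \<le> \<bar>b\<bar>" "\<bar>b\<bar> \<le> 1"
    have "H \<bar>b\<bar> \<le> H \<bar>a\<bar>"
    proof (rule DERIV_nonpos_imp_nonincreasing[OF ab(1)])
      fix x assume x: "\<bar>a\<bar> \<le> x" "x \<le> \<bar>b\<bar>"
      then have x01: "0 \<le> x" "x \<le> 1" using ab by auto
      have "(A + B*x) powr (p-1) \<le> (A - B*x) powr (p-1)"
        using pos[OF x01] p by (intro powr_mono2') auto
      then have "p * B * ((A + B*x) powr (p-1) - (A - B*x) powr (p-1)) \<le> 0"
        using p B by (intro mult_nonneg_nonpos) auto
      then show "\<exists>y. DERIV H x :> y \<and> y \<le> 0" using der[OF x01] by blast
    qed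
    then show "(A - B*b) powr p + (A + B*b) powr p \<le> (A - B*a) powr p + (A + B*a) powr p"
      using Habs[of a] Habs[of b] by (simp add: H_def)
  }
  {
    assume p: "p \<le> 0 \<or> 1 \<le> p" and ab: "\<bar>a\<bar> \<le> \<bar>b\<bar>" "\<bar>b\<bar> \<le> 1"
    have "H \<bar>a\<bar> \<le> H \<bar>b\<bar>"
    proof (rule DERIV_nonneg_imp_nondecreasing[OF ab(1)])
      fix x assume x: "\<bar>a\<bar> \<le> x" "x \<le> \<bar>b\<bar>"
      then have x01: "0 \<le> x" "x \<le> 1" using ab by auto
      have "0 \<le> p * B * ((A + B*x) powr (p-1) - (A - B*x) powr (p-1))"
        using p
      proof
        assume p0: "p \<le> 0"
        have "(A + B*x) powr (p-1) \<le> (A - B*x) powr (p-1)"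
          using pos[OF x01] p0 by (intro powr_mono2') auto
        moreover have "p * B \<le> 0" using p0 B by (simp add: mult_nonpos_nonneg)
        ultimately show ?thesis by (intro mult_nonpos_nonpos) auto
      next
        assume p1: "1 \<le> p"
        have "(A - B*x) powr (p-1) \<le> (A + B*x) powr (p-1)"
          using pos[OF x01] p1 by (intro powr_mono2) auto
        then show ?thesis using p1 B by (intro mult_nonneg_nonneg) auto
      qed
      then show "\<exists>y. DERIV H x :> y \<and> 0 \<le> y" using der[OF x01] by blast
    qed
    then show "(A - B*a) powr p + (A + B*a) powr p \<le> (A - B*b) powr p + (A + B*b) powr p"
      using Habs[of a] Habs[of b] by (simp add: H_def)
  }
qed



theorem corollary2p1:
  fixes n :: nat and \<alpha> q r s :: real
  assumes "n \<ge> 3" and "\<alpha> < 1" and "q \<ge> 1"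
    and "0 \<le> r" and "r < 1" and "0 \<le> s" and "s < 1"
  shows "(q = (2 * real n - 2) / (real n - \<alpha>) \<or> q = 2 * real n / (real n - \<alpha>) \<longrightarrow>
            (\<forall>\<beta>\<in>{0..pi}. \<forall>\<beta>'\<in>{0..pi}. calJ n \<alpha> \<beta> q r s = calJ n \<alpha> \<beta>' q r s))
       \<and> ((2 * real n - 2) / (real n - \<alpha>) < q \<and> q < 2 * real n / (real n - \<alpha>) \<longrightarrow>
            mono_on {0..pi/2} (\<lambda>\<beta>. calJ n \<alpha> \<beta> q r s)
            \<and> (\<forall>\<beta>\<in>{0..pi}. calJ n \<alpha> \<beta> q r s \<le> calJ n \<alpha> (pi/2) q r s))
       \<and> (q > 2 * real n / (real n - \<alpha>) \<or> q < (2 * real n - 2) / (real n - \<alpha>) \<longrightarrow>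
            antimono_on {0..pi/2} (\<lambda>\<beta>. calJ n \<alpha> \<beta> q r s)
            \<and> (\<forall>\<beta>\<in>{0..pi}. calJ n \<alpha> \<beta> q r s \<le> calJ n \<alpha> 0 q r s))"
proof -
  note a = assms
  define p where "p = (real n - \<alpha>) * q / 2 - real n + 1"
  define A where "A = 1 + s\<^sup>2"
  define B where "B = 2 * r * s"
  define f where "f \<theta> = (1 + s\<^sup>2 - 2 * r * s * cos \<theta>) powr p" for \<theta>
  define g where "g x = \<bar>cos x\<bar> powr q" for x
  define G where "G t = t powr (q/2)" for t :: real
  define H where "H c = (A - B*c) powr p + (A + B*c) powr p" for c
  define J where "J \<beta> = calJ n \<alpha> \<beta> q r s" for \<beta>
  have Jdef: "J \<beta> = integral {-pi..pi} (\<lambda>\<theta>. f \<theta> * g (\<theta> - \<beta>))" for \<beta>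
    by (simp add: J_def calJ_def f_def g_def p_def)
  have B0: "0 \<le> B" using a by (simp add: B_def)
  have BA: "B < A"
  proof -
    have "r * s \<le> 1 * s" using a by (intro mult_right_mono) auto
    moreover have "0 < (1 - s)\<^sup>2" using a by simp
    ultimately show ?thesis unfolding A_def B_def by (simp add: power2_eq_square algebra_simps)
  qed
  have fbase: "0 < 1 + s\<^sup>2 - 2 * r * s * cos \<theta>" for \<theta>
  proof -
    have "B * cos \<theta> \<le> B * 1" using B0 by (intro mult_left_mono) auto
    then show ?thesis using BA unfolding A_def B_def by simp
  qed
  have cf: "continuous_on UNIV f" unfolding f_def
    by (intro continuous_intros) (use fbase in \<open>auto simp: less_le\<close>)
  have cg: "continuous_on UNIV g" unfolding g_def
    by (rule continuous_on_powr') (use a in \<open>auto intro!: continuous_intros\<close>)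
  have fper: "f (x + 2*pi) = f x" for x by (simp add: f_def)
  have feven: "f (- x) = f x" for x by (simp add: f_def)
  have gdef: "g x = G ((cos x)\<^sup>2)" for x
  proof -
    have "(cos x)\<^sup>2 = \<bar>cos x\<bar> powr 2" by simp
    then have "G ((cos x)\<^sup>2) = (\<bar>cos x\<bar> powr 2) powr (q/2)" by (simp only: G_def)
    also have "\<dots> = \<bar>cos x\<bar> powr q" by (simp only: powr_powr) simp
    finally show ?thesis by (simp add: g_def)
  qed
  have Gmono: "G x \<le> G y" if "0 \<le> x" "x \<le> y" "y \<le> 1" for x y
    unfolding G_def using that a by (intro powr_mono2) auto
  have Hdef: "f x + f (x + pi) = H (cos x)" for x
    by (simp add: f_def H_def A_def B_def)
  have Hdec: "0 \<le> p \<Longrightarrow> p \<le> 1 \<Longrightarrow> \<bar>x\<bar> \<le> \<bar>y\<bar> \<Longrightarrow> \<bar>y\<bar> \<le> 1 \<Longrightarrow> H y \<le> H x" for x y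
    unfolding H_def by (rule H_mono(1)[OF B0 BA])
  have Hinc: "p \<le> 0 \<or> 1 \<le> p \<Longrightarrow> \<bar>x\<bar> \<le> \<bar>y\<bar> \<Longrightarrow> \<bar>y\<bar> \<le> 1 \<Longrightarrow> H x \<le> H y" for x y
    unfolding H_def by (rule H_mono(2)[OF B0 BA])
  have MONO: "0 \<le> p \<Longrightarrow> p \<le> 1 \<Longrightarrow> mono_on {0..pi/2} J"
    unfolding Jdef by (rule main_mono[OF cf cg fper gdef Gmono Hdef Hdec]) auto
  have ANTI: "p \<le> 0 \<or> 1 \<le> p \<Longrightarrow> antimono_on {0..pi/2} J"
    unfolding Jdef by (rule main_antimono[OF cf cg fper gdef Gmono Hdef Hinc]) auto
  have SYM: "J (pi - b) = J b" for b
    unfolding Jdef by (rule sym_pi[where f=f and g=g and G=G, OF feven gdef])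
  have red: "\<exists>b'\<in>{0..pi/2}. J b = J b'" if "b \<in> {0..pi}" for b
  proof (cases "b \<le> pi/2")
    case True then show ?thesis using that by auto
  next
    case False then show ?thesis using that SYM[of b] by (intro bexI[of _ "pi - b"]) auto
  qed
  have k: "0 < real n - \<alpha>" using a by simp
  have e1: "q = (2 * real n - 2) / (real n - \<alpha>) \<longleftrightarrow> p = 0"
    using k by (auto simp: p_def field_simps)
  have e2: "q = 2 * real n / (real n - \<alpha>) \<longleftrightarrow> p = 1"
    using k by (auto simp: p_def field_simps)
  have e3: "(2 * real n - 2) / (real n - \<alpha>) < q \<longleftrightarrow> 0 < p"
    using k by (auto simp: p_def field_simps)
  have e4: "q < 2 * real n / (real n - \<alpha>) \<longleftrightarrow> p < 1"
    using k by (auto simp: p_def field_simps)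
  have e5: "q < (2 * real n - 2) / (real n - \<alpha>) \<longleftrightarrow> p < 0"
    using k by (auto simp: p_def field_simps)
  have e6: "2 * real n / (real n - \<alpha>) < q \<longleftrightarrow> 1 < p"
    using k by (auto simp: p_def field_simps)
  have P1: "\<forall>\<beta>\<in>{0..pi}. \<forall>\<beta>'\<in>{0..pi}. J \<beta> = J \<beta>'" if "p = 0 \<or> p = 1"
  proof -
    have M: "mono_on {0..pi/2} J" using that by (intro MONO) auto
    have N: "antimono_on {0..pi/2} J" using that by (intro ANTI) auto
    have Z: "J b = J 0" if "b \<in> {0..pi/2}" for b
      using M N that by (auto simp: monotone_on_def intro!: antisym)
    have Z2: "J b = J 0" if hb: "b \<in> {0..pi}" for b
    proof -
      obtain b' where "b' \<in> {0..pi/2}" "J b = J b'" using red[OF hb] by blast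
      then show ?thesis using Z[of b'] by simp
    qed
    show ?thesis using Z2 by metis
  qed
  have P2: "mono_on {0..pi/2} J \<and> (\<forall>\<beta>\<in>{0..pi}. J \<beta> \<le> J (pi/2))" if "0 < p" "p < 1"
  proof -
    have M: "mono_on {0..pi/2} J" using that by (intro MONO) auto
    have "J b \<le> J (pi/2)" if "b \<in> {0..pi}" for b
      using red[OF that] M by (auto simp: monotone_on_def)
    then show ?thesis using M by auto
  qed
  have P3: "antimono_on {0..pi/2} J \<and> (\<forall>\<beta>\<in>{0..pi}. J \<beta> \<le> J 0)" if "p < 0 \<or> 1 < p"
  proof -
    have M: "antimono_on {0..pi/2} J" using that by (intro ANTI) auto
    have "J b \<le> J 0" if "b \<in> {0..pi}" for b
      using red[OF that] M by (auto simp: monotone_on_def)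
    then show ?thesis using M by auto
  qed
  show ?thesis
    unfolding J_def[symmetric] e1 e2 e3 e4 e5 e6
    using P1 P2 P3 by blast
qed

end
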